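(* Let $p,q$ be coprime integers with $2\le p<q$ and let $f(z_0,z_1)=z_0^p+z_1^q+\sum_{iq+jp>pq}a_{i,j}z_0^iz_1^j\in\mathbb{C}\{z_0,z_1\}$ (an irreducible plane curve singularity with single Puiseux pair $(p,q)$). Then: (a) $\Phi_f\!\left(\frac1p+\frac1q\right)>0$ unless $p=2$ and $q\in\{3,5\}$; moreover $\Phi_f\!\left(\frac1p+\frac1q\right)\to0$ as $p\to\infty$. (b) $\Phi_f\!\left(1-\frac1{pq}\right)<0$, and $\Phi_f\!\left(1-\frac1{pq}\right)\to0$ as $p\to\infty$.
   Context: For a plane curve germ $f$ (so $n=1$) with isolated singularity, Milnor number $\mu$ and spectral numbers $\alpha_1,\dots,\alpha_\mu\in(0,2)$ (Steenbrink's spectrum), define for $r\in[0,1]$ \[ \Phi_f(r)=\int_0^r N_2(s)\,ds-\frac1\mu\#\{i\mid \alpha_i\le r\}=\frac{r^2}{2}-\frac1\mu\#\{i\mid\alpha_i\le r\}, \] where $N_2(s)=s$ for $s\in[0,1]$ is the density of the sum of two independent uniform $[0,1]$ variables. For $f$ as in the claim, $\mu=(p-1)(q-1)$ and the spectral numbers are $\frac{i+1}{p}+\frac{j+1}{q}$ for $0\le i\le p-2$, $0\le j\le q-2$. *)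

theory Defs
  imports Complex_Main "HOL-Library.Multiset"
begin

text \<open>Steenbrink spectrum of the plane curve germ with single Puiseux pair (p,q),
  as a multiset of spectral numbers (i+1)/p + (j+1)/q, 0 <= i <= p-2, 0 <= j <= q-2.\<close>
definition puiseux_spectrum :: "nat \<Rightarrow> nat \<Rightarrow> real multiset" where
  "puiseux_spectrum p q =
     image_mset (\<lambda>(i, j). real (i + 1) / real p + real (j + 1) / real q)
       (mset_set ({0..<p - 1} \<times> {0..<q - 1}))"

text \<open>Phi for a curve (n = 1) with spectrum given as a multiset (size = Milnor number):
  Phi(r) = r^2/2 - #{i. alpha_i <= r} / mu.\<close>
definition Phi_spec :: "real multiset \<Rightarrow> real \<Rightarrow> real" where
  "Phi_spec alphas r = r ^ 2 / 2 - real (size (filter_mset (\<lambda>a. a \<le> r) alphas)) / real (size alphas)"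

end

theory Submission imports Defs begin


lemma size_spec: "size (puiseux_spectrum p q) = (p - 1) * (q - 1)"
  by (simp add: puiseux_spectrum_def)

lemma count_spec:
  "size (filter_mset P (puiseux_spectrum p q)) =
   card {(i,j) \<in> {0..<p - 1} \<times> {0..<q - 1}. P (real (i + 1) / real p + real (j + 1) / real q)}"
proof -
  have "filter_mset P (puiseux_spectrum p q) =
    image_mset (\<lambda>(i, j). real (i + 1) / real p + real (j + 1) / real q)
      (filter_mset (\<lambda>(i,j). P (real (i + 1) / real p + real (j + 1) / real q)) (mset_set ({0..<p - 1} \<times> {0..<q - 1})))"
    unfolding puiseux_spectrum_def by (simp add: image_mset_filter_mset_swap[symmetric] case_prod_unfold comp_def)
  also have "filter_mset (\<lambda>(i,j). P (real (i + 1) / real p + real (j + 1) / real q)) (mset_set ({0..<p - 1} \<times> {0..<q - 1}))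
     = mset_set {(i,j) \<in> {0..<p - 1} \<times> {0..<q - 1}. P (real (i + 1) / real p + real (j + 1) / real q)}"
    by (subst filter_mset_mset_set) (auto simp: case_prod_unfold intro!: arg_cong[where f=mset_set])
  finally show ?thesis by simp
qed

lemma half_count:
  fixes p q :: nat
  assumes cop: "coprime p q" and p2: "2 \<le> p" and q2: "2 \<le> q"
  shows "2 * card {(i,j) \<in> {0..<p - 1} \<times> {0..<q - 1}. (i+1)*q + (j+1)*p < p*q} = (p - 1) * (q - 1)"
proof -
  define A where "A = {0..<p - 1} \<times> {0..<q - 1}"
  define S where "S = {(i,j) \<in> A. (i+1)*q + (j+1)*p < p*q}"
  define T where "T = {(i,j) \<in> A. (i+1)*q + (j+1)*p > p*q}"
  define \<sigma> where "\<sigma> = (\<lambda>(i,j). (p - 2 - i, q - 2 - j))"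
  have fin: "finite S" "finite T" unfolding S_def T_def A_def by (auto intro: finite_subset[of _ "{0..<p - 1} \<times> {0..<q - 1}"])
  have noeq: "(i+1)*q + (j+1)*p \<noteq> p*q" if "i < p - 1" for i j
  proof
    assume h: "(i+1)*q + (j+1)*p = p*q"
    have "p dvd (i+1)*q + (j+1)*p" unfolding h by simp
    hence "p dvd (i+1)*q" by (simp add: dvd_add_left_iff)
    hence "p dvd i+1" using cop by (metis coprime_commute coprime_dvd_mult_left_iff)
    with that show False by (metis add_gr_0 dvd_imp_le less_diff_conv not_less zero_less_one)
  qed
  have AST: "A = S \<union> T" "S \<inter> T = {}"
  proof -
    show "S \<inter> T = {}" by (auto simp: S_def T_def)
    show "A = S \<union> T"
    proof
      show "A \<subseteq> S \<union> T"
      proof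
        fix x assume x: "x \<in> A"
        obtain i j where xij: "x = (i,j)" by force
        have "i < p - 1" using x xij by (auto simp: A_def)
        from noeq[OF this, of j] have "(i+1)*q + (j+1)*p < p*q \<or> (i+1)*q + (j+1)*p > p*q" by linarith
        thus "x \<in> S \<union> T" using x xij by (auto simp: S_def T_def)
      qed
    qed (auto simp: S_def T_def)
  qed
  have key: "(p - 2 - i + 1)*q + (q - 2 - j + 1)*p + ((i+1)*q + (j+1)*p) = 2*(p*q)"
    if "i < p - 1" "j < q - 1" for i j
  proof -
    define a where "a = p - 2 - i"
    define b where "b = q - 2 - j"
    have pa: "p = a + i + 2" using that a_def by arith
    have qb: "q = b + j + 2" using that b_def by arith
    have "(a + 1)*q + (b + 1)*p + ((i+1)*q + (j+1)*p) = 2*(p*q)"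
      unfolding pa qb by (simp add: algebra_simps)
    thus ?thesis unfolding a_def b_def .
  qed
  have inj: "inj_on \<sigma> A" unfolding inj_on_def \<sigma>_def A_def by auto
  have "\<sigma> ` S \<subseteq> T"
  proof
    fix x assume "x \<in> \<sigma> ` S"
    then obtain i j where ij: "(i,j) \<in> S" "x = (p - 2 - i, q - 2 - j)" by (auto simp: \<sigma>_def)
    hence "i < p - 1" "j < q - 1" "(i+1)*q + (j+1)*p < p*q" by (auto simp: S_def A_def)
    with key[OF this(1,2)] show "x \<in> T" using ij by (auto simp: T_def A_def)
  qed
  hence c1: "card S \<le> card T" using inj fin AST
    by (intro card_inj_on_le[of \<sigma>]) (auto intro: inj_on_subset)
  have "\<sigma> ` T \<subseteq> S"
  proof
    fix x assume "x \<in> \<sigma> ` T"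
    then obtain i j where ij: "(i,j) \<in> T" "x = (p - 2 - i, q - 2 - j)" by (auto simp: \<sigma>_def)
    hence "i < p - 1" "j < q - 1" "(i+1)*q + (j+1)*p > p*q" by (auto simp: T_def A_def)
    with key[OF this(1,2)] show "x \<in> S" using ij by (auto simp: S_def A_def)
  qed
  hence c2: "card T \<le> card S" using inj fin AST
    by (intro card_inj_on_le[of \<sigma>]) (auto intro: inj_on_subset)
  have "card A = card S + card T" using AST fin by (simp add: card_Un_disjoint)
  moreover have "card A = (p - 1) * (q - 1)" by (simp add: A_def)
  ultimately show ?thesis using c1 c2 unfolding S_def A_def by simp
qed


lemma phi_a:
  fixes p q :: nat
  assumes "2 \<le> p" "2 \<le> q"
  shows "Phi_spec (puiseux_spectrum p q) (1 / real p + 1 / real q)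
     = (1 / real p + 1 / real q)^2 / 2 - 1 / ((real p - 1) * (real q - 1))"
proof -
  have "{(i,j) \<in> {0..<p - 1} \<times> {0..<q - 1}. real (i + 1) / real p + real (j + 1) / real q \<le> 1 / real p + 1 / real q} = {(0,0)}"
  proof (intro equalityI subsetI)
    fix x assume x: "x \<in> {(i,j) \<in> {0..<p - 1} \<times> {0..<q - 1}. real (i + 1) / real p + real (j + 1) / real q \<le> 1 / real p + 1 / real q}"
    obtain i j where xij: "x = (i,j)" by force
    have le: "real (i + 1) / real p + real (j + 1) / real q \<le> 1 / real p + 1 / real q" using x xij by auto
    have e1: "real (i + 1) / real p = 1 / real p + real i / real p" by (simp add: add_divide_distrib)
    have e2: "real (j + 1) / real q = 1 / real q + real j / real q" by (simp add: add_divide_distrib)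
    have n1: "real i / real p \<ge> 0" "real j / real q \<ge> 0" by auto
    have "real i / real p = 0" "real j / real q = 0" using le e1 e2 n1 by linarith+
    hence "i = 0" "j = 0" using assms by auto
    thus "x \<in> {(0,0)}" using xij by simp
  next
    fix x assume "x \<in> {(0::nat, 0::nat)}"
    thus "x \<in> {(i,j) \<in> {0..<p - 1} \<times> {0..<q - 1}. real (i + 1) / real p + real (j + 1) / real q \<le> 1 / real p + 1 / real q}"
      using assms by auto
  qed
  thus ?thesis using assms
    by (simp add: Phi_spec_def count_spec size_spec of_nat_diff)
qed

lemma phi_b:
  fixes p q :: nat
  assumes "coprime p q" "2 \<le> p" "2 \<le> q"
  shows "Phi_spec (puiseux_spectrum p q) (1 - 1 / (real p * real q))
     = (1 - 1 / (real p * real q))^2 / 2 - 1 / 2"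
proof -
  have pq: "real p > 0" "real q > 0" using assms by auto
  have "{(i,j) \<in> {0..<p - 1} \<times> {0..<q - 1}. real (i + 1) / real p + real (j + 1) / real q \<le> 1 - 1 / (real p * real q)}
      = {(i,j) \<in> {0..<p - 1} \<times> {0..<q - 1}. (i+1)*q + (j+1)*p < p*q}"
  proof -
    have "real (i + 1) / real p + real (j + 1) / real q \<le> 1 - 1 / (real p * real q)
       \<longleftrightarrow> (i+1)*q + (j+1)*p < p*q" for i j
    proof -
      have e1: "real (i + 1) / real p + real (j + 1) / real q = real ((i+1)*q + (j+1)*p) / (real p * real q)"
        using pq by (simp add: field_simps)
      have e2: "1 - 1 / (real p * real q) = (real (p*q) - 1) / (real p * real q)"
        using pq by (simp add: field_simps)
      have "real (i + 1) / real p + real (j + 1) / real q \<le> 1 - 1 / (real p * real q)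
         \<longleftrightarrow> real ((i+1)*q + (j+1)*p) \<le> real (p*q) - 1"
        unfolding e1 e2 using mult_pos_pos[OF pq] by (simp add: divide_le_cancel del: of_nat_mult of_nat_add)
      also have "\<dots> \<longleftrightarrow> (i+1)*q + (j+1)*p < p*q" by linarith
      finally show ?thesis .
    qed
    thus ?thesis by auto
  qed
  hence c: "card {(i,j) \<in> {0..<p - 1} \<times> {0..<q - 1}. real (i + 1) / real p + real (j + 1) / real q \<le> 1 - 1 / (real p * real q)} * 2
     = (p - 1) * (q - 1)" using half_count[OF assms] by simp
  have pos: "(p - 1) * (q - 1) > 0" using assms by auto
  define C where "C = card {(i,j) \<in> {0..<p - 1} \<times> {0..<q - 1}. real (i + 1) / real p + real (j + 1) / real q \<le> 1 - 1 / (real p * real q)}"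
  have c2: "C * 2 = (p - 1) * (q - 1)" using c unfolding C_def .
  have c3: "real C * 2 = real ((p - 1) * (q - 1))" unfolding c2[symmetric] by simp
  have c4: "real ((p - 1) * (q - 1)) > 0" using pos by simp
  have h: "real C / real ((p - 1) * (q - 1)) = 1/2"
    using c3 c4 assms by (simp add: divide_eq_eq)
  have "Phi_spec (puiseux_spectrum p q) (1 - 1 / (real p * real q)) =
        (1 - 1 / (real p * real q))^2 / 2 - real C / real ((p - 1) * (q - 1))"
    unfolding Phi_spec_def count_spec size_spec C_def by (simp only:)
  thus ?thesis by (simp only: h)
qed

lemma sign_a:
  fixes x y :: real
  assumes "x > 1" "y > 1"
  shows "(1/x + 1/y)^2/2 - 1/((x-1)*(y-1)) > 0 \<longleftrightarrow> (x+y)^2*((x-1)*(y-1)) > 2*x^2*y^2"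
proof -
  have d: "2*x^2*y^2*((x-1)*(y-1)) > 0" using assms by simp
  have "(1/x + 1/y)^2/2 - 1/((x-1)*(y-1)) = ((x+y)^2*((x-1)*(y-1)) - 2*x^2*y^2) / (2*x^2*y^2*((x-1)*(y-1)))"
  proof -
    have xn: "x \<noteq> 0" "y \<noteq> 0" "(x-1)*(y-1) \<noteq> 0" using assms by auto
    have "(1/x + 1/y)^2/2 = (x+y)^2 / (2*x^2*y^2)" using xn by (simp add: field_simps power2_eq_square)
    moreover have "(x+y)^2 / (2*x^2*y^2) - 1/((x-1)*(y-1)) = ((x+y)^2*((x-1)*(y-1)) - 1*(2*x^2*y^2)) / ((2*x^2*y^2)*((x-1)*(y-1)))"
      by (rule diff_frac_eq) (use xn in auto)
    ultimately show ?thesis by simp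
  qed
  thus ?thesis using d by (simp add: zero_less_divide_iff)
qed

lemma ineq_p2:
  fixes y :: real assumes "y \<ge> 7"
  shows "(2+y)^2*((2-1)*(y-1)) > 2*2^2*y^2"
proof -
  define t where "t = y - 7"
  have y: "y = t + 7" and t: "t \<ge> 0" using assms by (auto simp: t_def)
  have e: "(2+y)^2*((2-1)*(y-1)) - 2*2^2*y^2 = t^3 + 16*t^2 + 77*t + 94"
    unfolding y by (simp add: algebra_simps power2_eq_square power3_eq_cube)
  have "t^3 \<ge> 0" "t^2 \<ge> 0" using t by auto
  hence "t^3 + 16*t^2 + 77*t + 94 > 0" using t by linarith
  thus ?thesis using e by linarith
qed

lemma ineq_gen:
  fixes x y :: real assumes "x \<ge> 3" "y \<ge> 5"
  shows "(x+y)^2*((x-1)*(y-1)) > 2*x^2*y^2"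
proof -
  have "(x-2)*(y-2) \<ge> 1*3" using assms by (intro mult_mono) auto
  hence h: "2*((x-1)*(y-1)) > x*y" by (simp add: algebra_simps)
  have xy: "x*y > 0" using assms by simp
  have "(x+y)^2 - 4*(x*y) = (x-y)^2" by (simp add: algebra_simps power2_eq_square)
  hence s: "(x+y)^2 \<ge> 4*(x*y)" by (metis diff_ge_0_iff_ge zero_le_power2)
  have M: "(x-1)*(y-1) > 0" using assms by simp
  have "(x+y)^2*((x-1)*(y-1)) \<ge> 4*(x*y)*((x-1)*(y-1))" using s M by (intro mult_right_mono) auto
  moreover have "4*(x*y)*((x-1)*(y-1)) = (2*(x*y))*(2*((x-1)*(y-1)))" by simp
  moreover have "(2*(x*y))*(2*((x-1)*(y-1))) > (2*(x*y))*(x*y)" using h xy by (intro mult_strict_left_mono) auto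
  moreover have "(2*(x*y))*(x*y) = 2*x^2*y^2" by (simp add: power2_eq_square)
  ultimately show ?thesis by linarith
qed


lemma part1:
  fixes p q :: nat
  assumes cop: "coprime p q" and p2: "2 \<le> p" and pq: "p < q"
  shows "Phi_spec (puiseux_spectrum p q) (1 / real p + 1 / real q) > 0 \<longleftrightarrow> \<not> (p = 2 \<and> q \<in> {3, 5})"
proof -
  have x1: "real p > 1" "real q > 1" using p2 pq by auto
  have eq: "Phi_spec (puiseux_spectrum p q) (1 / real p + 1 / real q) > 0 \<longleftrightarrow>
     (real p + real q)^2*((real p - 1)*(real q - 1)) > 2*(real p)^2*(real q)^2"
    using phi_a[of p q] sign_a[OF x1] p2 pq by simp
  show ?thesis
  proof (cases "p = 2 \<and> q \<in> {3, 5}")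
    case True
    then show ?thesis unfolding eq by (auto simp: power2_eq_square)
  next
    case False
    have "(real p + real q)^2*((real p - 1)*(real q - 1)) > 2*(real p)^2*(real q)^2"
    proof (cases "p = 2")
      case True
      hence "odd q" using cop by simp
      hence "q \<ge> 7" using False True pq by (auto elim!: oddE)
      hence "real q \<ge> 7" by simp
      from ineq_p2[OF this] show ?thesis using True by simp
    next
      case p3: False
      show ?thesis
      proof (cases "p = 3 \<and> q = 4")
        case True
        then show ?thesis by (simp add: power2_eq_square)
      next
        case False
        hence "real p \<ge> 3" "real q \<ge> 5" using p3 p2 pq by auto
        from ineq_gen[OF this] show ?thesis .
      qed
    qed
    then show ?thesis using False eq by simp
  qed
qed

lemma part2:
  fixes \<epsilon> :: real assumes "\<epsilon> > 0"
  shows "\<exists>P. \<forall>p q :: nat. coprime p q \<and> 2 \<le> p \<and> p < q \<and> P \<le> p \<longrightarrow>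
            \<bar>Phi_spec (puiseux_spectrum p q) (1 / real p + 1 / real q)\<bar> < \<epsilon>"
proof (intro exI allI impI)
  fix p q :: nat
  assume h: "coprime p q \<and> 2 \<le> p \<and> p < q \<and> nat \<lceil>1/\<epsilon>\<rceil> + 2 \<le> p"
  define x where "x = real p"
  define y where "y = real q"
  have x2: "x \<ge> 2" and xy: "x < y" using h by (auto simp: x_def y_def)
  have "real (nat \<lceil>1/\<epsilon>\<rceil>) \<ge> 1/\<epsilon>" by linarith
  moreover have "real (nat \<lceil>1/\<epsilon>\<rceil>) + 2 \<le> x" using h unfolding x_def
    by (metis of_nat_add of_nat_le_iff of_nat_numeral)
  ultimately have xe: "x - 1 > 1/\<epsilon>" by linarith
  have epsb: "1/(x-1) < \<epsilon>"
  proof -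
    have "inverse (x-1) < inverse (1/\<epsilon>)" using xe assms by (intro less_imp_inverse_less) auto
    thus ?thesis by (simp add: inverse_eq_divide)
  qed
  define a where "a = (1/x + 1/y)^2/2"
  define b where "b = 1/((x-1)*(y-1))"
  have s1: "1/x \<le> 1/2" "1/y \<le> 1/x" using x2 xy by (auto simp: field_simps)
  have s0: "1/x \<ge> 0" "1/y \<ge> 0" using x2 xy by auto
  have "(1/x + 1/y)^2 \<le> (1/x + 1/y) * 1"
    unfolding power2_eq_square using s1 s0 by (intro mult_left_mono) auto
  hence a1: "a \<le> 1/x" using s1 unfolding a_def by simp
  have a0: "a \<ge> 0" unfolding a_def by simp
  have "1/x \<le> 1/(x-1)" using x2 by (simp add: frac_le)
  have "(x-1) * 1 \<le> (x-1)*(y-1)" using x2 xy by (intro mult_left_mono) auto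
  hence b1: "b \<le> 1/(x-1)" unfolding b_def using x2 by (simp add: frac_le)
  have b0: "b \<ge> 0" unfolding b_def using x2 xy by simp
  have "Phi_spec (puiseux_spectrum p q) (1 / real p + 1 / real q) = a - b"
    using phi_a[of p q] h unfolding a_def b_def x_def y_def by simp
  moreover have "\<bar>a - b\<bar> \<le> 1/(x-1)" using a0 a1 b0 b1 \<open>1/x \<le> 1/(x-1)\<close> by linarith
  ultimately show "\<bar>Phi_spec (puiseux_spectrum p q) (1 / real p + 1 / real q)\<bar> < \<epsilon>" using epsb by simp
qed

lemma part3:
  fixes p q :: nat
  assumes "coprime p q" "2 \<le> p" "p < q"
  shows "Phi_spec (puiseux_spectrum p q) (1 - 1 / (real p * real q)) < 0"
proof -
  have x: "real p > 1" "real q > 1" using assms by auto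
  have "real p * 1 < real p * real q" using x by (intro mult_strict_left_mono) auto
  hence "real p * real q > 1" using x by linarith
  hence d: "1 / (real p * real q) > 0" "1 / (real p * real q) < 1" by auto
  define r where "r = 1 - 1 / (real p * real q)"
  have r: "0 \<le> r" "r < 1" using d unfolding r_def by linarith+
  have "r * r \<le> r * 1" using r by (intro mult_left_mono) auto
  hence r2: "r^2 < 1" using r by (simp add: power2_eq_square)
  have "Phi_spec (puiseux_spectrum p q) r = r^2 / 2 - 1 / 2"
    unfolding r_def using assms by (intro phi_b) auto
  thus ?thesis using r2 unfolding r_def by linarith
qed

lemma part4:
  fixes \<epsilon> :: real assumes "\<epsilon> > 0"
  shows "\<exists>P. \<forall>p q :: nat. coprime p q \<and> 2 \<le> p \<and> p < q \<and> P \<le> p \<longrightarrow>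
            \<bar>Phi_spec (puiseux_spectrum p q) (1 - 1 / (real p * real q))\<bar> < \<epsilon>"
proof (intro exI allI impI)
  fix p q :: nat
  assume h: "coprime p q \<and> 2 \<le> p \<and> p < q \<and> nat \<lceil>1/\<epsilon>\<rceil> + 2 \<le> p"
  define x where "x = real p"
  define y where "y = real q"
  have x2: "x \<ge> 2" and xy: "x < y" using h by (auto simp: x_def y_def)
  have "real (nat \<lceil>1/\<epsilon>\<rceil>) \<ge> 1/\<epsilon>" by linarith
  moreover have "real (nat \<lceil>1/\<epsilon>\<rceil>) + 2 \<le> x" using h unfolding x_def
    by (metis of_nat_add of_nat_le_iff of_nat_numeral)
  ultimately have xe: "x > 1/\<epsilon>" by linarith
  have epsb: "1/x < \<epsilon>"
  proof -
    have "inverse x < inverse (1/\<epsilon>)" using xe assms by (intro less_imp_inverse_less) auto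
    thus ?thesis by (simp add: inverse_eq_divide)
  qed
  define d where "d = 1/(x*y)"
  have d0: "d > 0" unfolding d_def using x2 xy by simp
  have "x * 1 \<le> x * y" using x2 xy by (intro mult_left_mono) auto
  hence d1: "d \<le> 1/x" unfolding d_def using x2 by (simp add: frac_le)
  have "1/x \<le> 1" using x2 by simp
  hence d2: "d \<le> 1" using d1 by linarith
  have "Phi_spec (puiseux_spectrum p q) (1 - 1 / (real p * real q)) = (1 - d)^2/2 - 1/2"
    using phi_b[of p q] h unfolding d_def x_def y_def by simp
  also have "\<dots> = - (d * (2 - d) / 2)" by (simp add: power2_eq_square field_simps)
  finally have e: "\<bar>Phi_spec (puiseux_spectrum p q) (1 - 1 / (real p * real q))\<bar> = d * (2 - d) / 2"
    using d0 d2 by simp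
  have "d * (2 - d) \<le> d * 2" using d0 by (intro mult_left_mono) auto
  hence "d * (2 - d) / 2 \<le> d" by simp
  thus "\<bar>Phi_spec (puiseux_spectrum p q) (1 - 1 / (real p * real q))\<bar> < \<epsilon>" using e d1 epsb by linarith
qed

theorem proposition1p5:
  shows "(\<forall>p q :: nat. coprime p q \<and> 2 \<le> p \<and> p < q \<longrightarrow>
            (Phi_spec (puiseux_spectrum p q) (1 / real p + 1 / real q) > 0
               \<longleftrightarrow> \<not> (p = 2 \<and> q \<in> {3, 5})))
       \<and> (\<forall>\<epsilon> > 0. \<exists>P. \<forall>p q :: nat. coprime p q \<and> 2 \<le> p \<and> p < q \<and> P \<le> p \<longrightarrow>
            \<bar>Phi_spec (puiseux_spectrum p q) (1 / real p + 1 / real q)\<bar> < \<epsilon>)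
       \<and> (\<forall>p q :: nat. coprime p q \<and> 2 \<le> p \<and> p < q \<longrightarrow>
            Phi_spec (puiseux_spectrum p q) (1 - 1 / (real p * real q)) < 0)
       \<and> (\<forall>\<epsilon> > 0. \<exists>P. \<forall>p q :: nat. coprime p q \<and> 2 \<le> p \<and> p < q \<and> P \<le> p \<longrightarrow>
            \<bar>Phi_spec (puiseux_spectrum p q) (1 - 1 / (real p * real q))\<bar> < \<epsilon>)"
proof (intro conjI)
  show "\<forall>p q :: nat. coprime p q \<and> 2 \<le> p \<and> p < q \<longrightarrow>
            (Phi_spec (puiseux_spectrum p q) (1 / real p + 1 / real q) > 0
               \<longleftrightarrow> \<not> (p = 2 \<and> q \<in> {3, 5}))" using part1 by blast
  show "\<forall>p q :: nat. coprime p q \<and> 2 \<le> p \<and> p < q \<longrightarrow>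
            Phi_spec (puiseux_spectrum p q) (1 - 1 / (real p * real q)) < 0" using part3 by blast
qed (use part2 part4 in blast)+

end
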